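(* Every strongly $D$-continuous poset with complementation is pseudo-orthomodular. Every finite pseudo-orthomodular poset is strongly $D$-continuous.
   Context: For $M\subseteq P$, $U(M)$, $L(M)$ are the sets of upper and lower bounds; $U(a,b)=U(\{a,b\})$ etc. For $B,C\subseteq P$, $B\le C$ means $b\le c$ for all $b\in B$, $c\in C$. A poset with complementation is a bounded poset $(P,\le,{}',0,1)$ with antitone involution $'$ ($x\le y\Rightarrow y'\le x'$, $x''=x$) with $L(x,x')=\{0\}$, $U(x,x')=\{1\}$; it is pseudo-orthomodular if $L(U(L(x,y),y'),y)=L(x,y)$ for all $x,y$. It is strongly $D$-continuous if for all $B,C\subseteq P$ with $B\le C$: $\bigwedge_{\mathbf P}\{g\in P\mid g\in C\text{ or } g'\in B\}=0$ if and only if every lower bound of $C$ in $P$ is below every upper bound of $B$ in $P$. *)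

theory Defs
  imports Main
begin

definition Ub :: "'a::order set \<Rightarrow> 'a set" where
  "Ub M = {x. \<forall>m\<in>M. m \<le> x}"

definition Lb :: "'a::order set \<Rightarrow> 'a set" where
  "Lb M = {x. \<forall>m\<in>M. x \<le> m}"

definition set_le :: "'a::order set \<Rightarrow> 'a set \<Rightarrow> bool" where
  "set_le B C \<longleftrightarrow> (\<forall>b\<in>B. \<forall>c\<in>C. b \<le> c)"

definition is_meet :: "'a::order set \<Rightarrow> 'a \<Rightarrow> bool" where
  "is_meet S a \<longleftrightarrow> a \<in> Lb S \<and> (\<forall>b\<in>Lb S. b \<le> a)"

definition poset_compl :: "('a::order \<Rightarrow> 'a) \<Rightarrow> 'a \<Rightarrow> 'a \<Rightarrow> bool" where
  "poset_compl c z u \<longleftrightarrow>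
     (\<forall>x. z \<le> x \<and> x \<le> u) \<and>
     (\<forall>x y. x \<le> y \<longrightarrow> c y \<le> c x) \<and>
     (\<forall>x. c (c x) = x) \<and>
     (\<forall>x. Lb {x, c x} = {z}) \<and>
     (\<forall>x. Ub {x, c x} = {u})"

definition pseudo_orthomodular :: "('a::order \<Rightarrow> 'a) \<Rightarrow> bool" where
  "pseudo_orthomodular c \<longleftrightarrow>
     (\<forall>x y. Lb (Ub (Lb {x, y} \<union> {c y}) \<union> {y}) = Lb {x, y})"

definition strongly_D_continuous :: "('a::order \<Rightarrow> 'a) \<Rightarrow> 'a \<Rightarrow> bool" where
  "strongly_D_continuous c z \<longleftrightarrow>
     (\<forall>B C. set_le B C \<longrightarrow>
        (is_meet {g. g \<in> C \<or> c g \<in> B} z \<longleftrightarrow> set_le (Lb C) (Ub B)))"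

end

theory Submission
  imports Defs
begin

lemma pc_parts:
  assumes "poset_compl c z u"
  shows "\<forall>x. z \<le> x \<and> x \<le> u" "\<forall>x y. x \<le> y \<longrightarrow> c y \<le> c x"
    "\<forall>x. c (c x) = x" "\<forall>x. Lb {x, c x} = {z}" "\<forall>x. Ub {x, c x} = {u}"
  using assms unfolding poset_compl_def by simp_all
lemma pc_bot: "poset_compl c z u \<Longrightarrow> z \<le> x" using pc_parts(1) by fast
lemma pc_top: "poset_compl c z u \<Longrightarrow> x \<le> u" using pc_parts(1) by fast
lemma pc_anti: "poset_compl c z u \<Longrightarrow> x \<le> y \<Longrightarrow> c y \<le> c x" using pc_parts(2) by fast
lemma pc_inv: "poset_compl c z u \<Longrightarrow> c (c x) = x" using pc_parts(3) by fast
lemma pc_lb: "poset_compl c z u \<Longrightarrow> v \<le> x \<Longrightarrow> v \<le> c x \<Longrightarrow> v = z"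
proof -
  assume a: "poset_compl c z u" "v \<le> x" "v \<le> c x"
  then have "v \<in> Lb {x, c x}" unfolding Lb_def by auto
  moreover have "Lb {x, c x} = {z}" using pc_parts(4)[OF a(1)] by fast
  ultimately show ?thesis by auto
qed
lemma pc_cz: "poset_compl c z u \<Longrightarrow> c z = u"
proof -
  assume a: "poset_compl c z u"
  have "c z \<in> Ub {z, c z}" unfolding Ub_def using pc_bot[OF a] by auto
  moreover have "Ub {z, c z} = {u}" using pc_parts(5)[OF a] by fast
  ultimately show ?thesis by auto
qed
lemma pc_le_c: "poset_compl c z u \<Longrightarrow> x \<le> c y \<Longrightarrow> y \<le> c x"
  by (metis pc_anti pc_inv)

lemma gp:
  assumes pom: "pseudo_orthomodular c"
    and D: "D = Lb X" and Dm: "D \<subseteq> Lb {m}"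
  shows "Lb (Ub (D \<union> {c m}) \<union> {m}) \<subseteq> D"
proof
  fix v assume v: "v \<in> Lb (Ub (D \<union> {c m}) \<union> {m})"
  have "v \<le> x" if x: "x \<in> X" for x
  proof -
    have "D \<subseteq> Lb {x, m}" using D Dm x unfolding Lb_def by auto
    then have "Ub (Lb {x, m} \<union> {c m}) \<subseteq> Ub (D \<union> {c m})" unfolding Ub_def by auto
    then have "v \<in> Lb (Ub (Lb {x, m} \<union> {c m}) \<union> {m})" using v unfolding Lb_def by auto
    then have "v \<in> Lb {x, m}" using pom unfolding pseudo_orthomodular_def by metis
    then show ?thesis unfolding Lb_def by auto
  qed
  then show "v \<in> D" using D unfolding Lb_def by auto
qed

lemma main_ind:
  assumes pc: "poset_compl c z u" and pom: "pseudo_orthomodular c"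
    and fin: "finite (UNIV :: 'a set)"
  shows "\<And>(B::'a::order set) C. card (Ub B) = n \<Longrightarrow> set_le B C \<Longrightarrow>
     (\<forall>v. (\<forall>x\<in>C. v \<le> x) \<and> (\<forall>b\<in>B. v \<le> c b) \<longrightarrow> v = z) \<Longrightarrow> set_le (Lb C) (Ub B)"
proof (induction n rule: less_induct)
  case (less n B C)
  note BC = less.prems(2) and H = less.prems(3)
  show ?case
  proof (cases "\<exists>m\<in>Ub (Lb C). m \<noteq> u")
    case False
    have Cu: "\<forall>x\<in>C. x = u"
    proof
      fix x assume "x \<in> C"
      then have "x \<in> Ub (Lb C)" unfolding Ub_def Lb_def by auto
      then show "x = u" using False by auto
    qed
    show ?thesis unfolding set_le_def
    proof (intro ballI)
      fix w t assume t: "t \<in> Ub B"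
      have "c t = z"
      proof (rule H[rule_format], intro conjI ballI)
        fix x assume "x \<in> C" then show "c t \<le> x" using Cu pc_top[OF pc] by auto
      next
        fix b assume "b \<in> B" then have "b \<le> t" using t unfolding Ub_def by auto
        then show "c t \<le> c b" using pc_anti[OF pc] by auto
      qed
      then have "t = u" using pc_inv[OF pc, of t] pc_cz[OF pc] by auto
      then show "w \<le> t" using pc_top[OF pc] by auto
    qed
  next
    case True
    then obtain m where m: "m \<in> Ub (Lb C)" "m \<noteq> u" by auto
    define B1 where "B1 = insert (c m) B"
    define C1 where "C1 = Ub (Lb C \<union> {c m})"
    have BL: "B \<subseteq> Lb C" using BC unfolding set_le_def Lb_def by auto
    have CU: "C \<subseteq> Ub B" using BC unfolding set_le_def Ub_def by auto
    have LCm: "Lb C \<subseteq> Lb {m}" using m(1) unfolding Lb_def Ub_def by auto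
    have BC1: "set_le B1 C1" unfolding set_le_def B1_def C1_def
      using BL unfolding Ub_def by auto
    have H1: "\<forall>v. (\<forall>x\<in>C1. v \<le> x) \<and> (\<forall>b\<in>B1. v \<le> c b) \<longrightarrow> v = z"
    proof (intro allI impI)
      fix v assume v: "(\<forall>x\<in>C1. v \<le> x) \<and> (\<forall>b\<in>B1. v \<le> c b)"
      then have "v \<le> m" using pc_inv[OF pc, of m] unfolding B1_def by auto
      with v have "v \<in> Lb (Ub (Lb C \<union> {c m}) \<union> {m})" unfolding C1_def Lb_def by auto
      then have "v \<in> Lb C" using gp[OF pom refl LCm] by auto
      then have "\<forall>x\<in>C. v \<le> x" unfolding Lb_def by auto
      moreover have "\<forall>b\<in>B. v \<le> c b" using v unfolding B1_def by auto
      ultimately show "v = z" using H by blast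
    qed
    have sub: "Ub B1 \<subseteq> Ub B" unfolding B1_def Ub_def by auto
    have "\<exists>t\<in>Ub B. \<not> c m \<le> t"
    proof (rule ccontr)
      assume "\<not> (\<exists>t\<in>Ub B. \<not> c m \<le> t)"
      then have "\<forall>x\<in>C. c m \<le> x" using CU by auto
      then have "c m \<in> Lb C" unfolding Lb_def by auto
      then have "c m \<le> m" using m(1) unfolding Ub_def by auto
      then have "c m = z" using pc_lb[OF pc, of "c m" "c m"] pc_inv[OF pc, of m] by auto
      then have "m = u" using pc_inv[OF pc, of m] pc_cz[OF pc] by auto
      then show False using m(2) by auto
    qed
    then have "Ub B1 \<noteq> Ub B" unfolding B1_def Ub_def by auto
    then have "Ub B1 \<subset> Ub B" using sub by auto
    then have lt: "card (Ub B1) < n" using less.prems(1) fin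
      by (metis psubset_card_mono rev_finite_subset subset_UNIV)
    have IH: "set_le (Lb C1) (Ub B1)" using less.IH[OF lt refl BC1 H1] .
    show ?thesis unfolding set_le_def
    proof (intro ballI)
      fix w t assume w: "w \<in> Lb C" and t: "t \<in> Ub B"
      have "w \<in> Lb C1" using w unfolding C1_def Lb_def Ub_def by auto
      then have "w \<in> Lb (Ub B1)" using IH unfolding set_le_def Lb_def by auto
      moreover have "w \<le> m" using w LCm unfolding Lb_def by auto
      ultimately have w1: "w \<in> Lb (Ub B1 \<union> {m})" unfolding Lb_def by auto
      have "Ub (Lb (Ub B) \<union> {c m}) \<subseteq> Ub B1"
      proof
        fix y assume y: "y \<in> Ub (Lb (Ub B) \<union> {c m})"
        have "B \<subseteq> Lb (Ub B)" unfolding Lb_def Ub_def by auto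
        then show "y \<in> Ub B1" using y unfolding B1_def Ub_def by auto
      qed
      then have "w \<in> Lb (Ub (Lb (Ub B) \<union> {c m}) \<union> {m})" using w1 unfolding Lb_def by auto
      moreover have "Lb (Ub B) \<subseteq> Lb {m}" using CU LCm unfolding Lb_def by auto
      ultimately have "w \<in> Lb (Ub B)" using gp[OF pom refl] by blast
      then show "w \<le> t" using t unfolding Lb_def by auto
    qed
  qed
qed

theorem corollary5:
  fixes c :: "'a::order \<Rightarrow> 'a" and z u :: 'a
  assumes "poset_compl c z u"
  shows "(strongly_D_continuous c z \<longrightarrow> pseudo_orthomodular c) \<and>
         (finite (UNIV :: 'a set) \<and> pseudo_orthomodular c \<longrightarrow> strongly_D_continuous c z)"
proof (intro conjI impI)
  note pc = assms
  assume sdc: "strongly_D_continuous c z"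
  show "pseudo_orthomodular c" unfolding pseudo_orthomodular_def
  proof (intro allI equalityI)
    fix x y
    show "Lb {x, y} \<subseteq> Lb (Ub (Lb {x, y} \<union> {c y}) \<union> {y})"
      unfolding Lb_def Ub_def by auto
    define B where "B = Lb {x, y}"
    define C where "C = Ub (Lb {x, y} \<union> {c y}) \<union> {y}"
    have BC: "set_le B C" unfolding B_def C_def set_le_def Lb_def Ub_def by auto
    have "is_meet {g. g \<in> C \<or> c g \<in> B} z"
      unfolding is_meet_def
    proof
      show "z \<in> Lb {g. g \<in> C \<or> c g \<in> B}" unfolding Lb_def using pc_bot[OF pc] by auto
      show "\<forall>v\<in>Lb {g. g \<in> C \<or> c g \<in> B}. v \<le> z"
      proof
        fix v assume v: "v \<in> Lb {g. g \<in> C \<or> c g \<in> B}"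
        have vC: "\<forall>g\<in>C. v \<le> g" using v unfolding Lb_def by auto
        have vB: "\<forall>b\<in>B. v \<le> c b" using v pc_inv[OF pc] unfolding Lb_def by auto
        have "v \<le> y" using vC unfolding C_def by auto
        then have "c y \<le> c v" using pc_anti[OF pc] by auto
        moreover have "\<forall>b\<in>B. b \<le> c v" using vB pc_le_c[OF pc] by blast
        ultimately have "c v \<in> C" unfolding C_def B_def Ub_def by auto
        then have "v \<le> c v" using vC by auto
        then have "v = z" using pc_lb[OF pc] by blast
        then show "v \<le> z" by auto
      qed
    qed
    then have "set_le (Lb C) (Ub B)" using sdc BC unfolding strongly_D_continuous_def by blast
    moreover have "x \<in> Ub B" unfolding B_def Ub_def Lb_def by auto
    ultimately have "\<forall>w\<in>Lb C. w \<le> x" unfolding set_le_def by auto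
    then show "Lb (Ub (Lb {x, y} \<union> {c y}) \<union> {y}) \<subseteq> Lb {x, y}"
    proof (intro subsetI)
      fix w assume a: "\<forall>w\<in>Lb C. w \<le> x" and w: "w \<in> Lb (Ub (Lb {x, y} \<union> {c y}) \<union> {y})"
      have "w \<in> Lb C" using w unfolding C_def .
      then have "w \<le> x" using a by blast
      moreover have "w \<le> y" using w unfolding Lb_def by blast
      ultimately show "w \<in> Lb {x, y}" unfolding Lb_def by blast
    qed
  qed
next
  note pc = assms
  assume "finite (UNIV :: 'a set) \<and> pseudo_orthomodular c"
  then have fin: "finite (UNIV :: 'a set)" and pom: "pseudo_orthomodular c" by auto
  show "strongly_D_continuous c z" unfolding strongly_D_continuous_def
  proof (intro allI impI iffI)
    fix B C :: "'a set"
    assume BC: "set_le B C" and im: "is_meet {g. g \<in> C \<or> c g \<in> B} z"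
    have H: "\<forall>v. (\<forall>x\<in>C. v \<le> x) \<and> (\<forall>b\<in>B. v \<le> c b) \<longrightarrow> v = z"
    proof (intro allI impI)
      fix v assume v: "(\<forall>x\<in>C. v \<le> x) \<and> (\<forall>b\<in>B. v \<le> c b)"
      have "v \<le> g" if g: "g \<in> {g. g \<in> C \<or> c g \<in> B}" for g
      proof -
        have "g \<in> C \<or> c g \<in> B" using g by simp
        then show ?thesis
        proof
          assume "g \<in> C" then show ?thesis using v by blast
        next
          assume "c g \<in> B" then have "v \<le> c (c g)" using v by blast
          then show ?thesis using pc_inv[OF pc, of g] by simp
        qed
      qed
      then have "v \<in> Lb {g. g \<in> C \<or> c g \<in> B}" unfolding Lb_def by blast
      then have "v \<le> z" using im unfolding is_meet_def by auto
      then show "v = z" using pc_bot[OF pc, of v] by auto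
    qed
    show "set_le (Lb C) (Ub B)" using main_ind[OF pc pom fin refl BC H] .
  next
    fix B C :: "'a set"
    assume BC: "set_le B C" and le: "set_le (Lb C) (Ub B)"
    show "is_meet {g. g \<in> C \<or> c g \<in> B} z" unfolding is_meet_def
    proof
      show "z \<in> Lb {g. g \<in> C \<or> c g \<in> B}" unfolding Lb_def using pc_bot[OF pc] by auto
      show "\<forall>v\<in>Lb {g. g \<in> C \<or> c g \<in> B}. v \<le> z"
      proof
        fix v assume v: "v \<in> Lb {g. g \<in> C \<or> c g \<in> B}"
        have vC: "v \<in> Lb C" using v unfolding Lb_def by auto
        have vB: "\<forall>b\<in>B. v \<le> c b" using v pc_inv[OF pc] unfolding Lb_def by auto
        have "c v \<in> Ub B" using vB pc_le_c[OF pc] unfolding Ub_def by blast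
        then have "v \<le> c v" using le vC unfolding set_le_def by auto
        then have "v = z" using pc_lb[OF pc] by blast
        then show "v \<le> z" by auto
      qed
    qed
  qed
qed

end
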